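(* Let $\alpha=\exp\left(\frac{2\pi i}{5}\right)$, let $c,x\in\mathbb{C}$, let $a_1,\dots,a_p\in\mathbb{C}$ and $b_1,\dots,b_q\in\mathbb{C}\setminus\{0,-1,-2,\dots\}$, and suppose either $5p\le 5q+4$ (with $x$ arbitrary), or $p=q+1$ and $\left|\left(\frac{cx^2}{5^{1+q-p}}\right)^5\right|<1$. Then $$\sum_{k=0}^{4}\alpha^{k}\,{}_pF_q\left[\begin{array}{c}a_1,\dots,a_p;\\ b_1,\dots,b_q;\end{array}c(x\alpha^k)^2\right] =\frac{5c^2x^4}{2}\,\frac{\prod_{i=1}^{p}(a_i)_2}{\prod_{i=1}^{q}(b_i)_2}\;{}_{5p}F_{5q+4}\left[\begin{array}{c}\Big\{\tfrac{a_j+2}{5},\tfrac{a_j+3}{5},\tfrac{a_j+4}{5},\tfrac{a_j+5}{5},\tfrac{a_j+6}{5}\Big\}_{j=1}^{p};\\ \tfrac35,\tfrac45,\tfrac65,\tfrac75,\Big\{\tfrac{b_j+2}{5},\tfrac{b_j+3}{5},\tfrac{b_j+4}{5},\tfrac{b_j+5}{5},\tfrac{b_j+6}{5}\Big\}_{j=1}^{q};\end{array}\left(\frac{cx^2}{5^{1+q-p}}\right)^5\right],$$ where the braces denote the lists of parameters obtained for $j=1,\dots,p$ (resp. $j=1,\dots,q$).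
   Context: The generalized hypergeometric function is ${}_pF_q\left[\begin{array}{c}\alpha_1,\dots,\alpha_p;\\\beta_1,\dots,\beta_q;\end{array}z\right]=\sum_{n=0}^{\infty}\frac{(\alpha_1)_n\cdots(\alpha_p)_n}{(\beta_1)_n\cdots(\beta_q)_n}\frac{z^n}{n!}$, with $(\lambda)_n=\lambda(\lambda+1)\cdots(\lambda+n-1)$, $(\lambda)_0=1$; in particular $(\lambda)_2=\lambda(\lambda+1)$. Values of parameters and variables for which the expressions do not make sense are excluded. *)

theory Defs
  imports "HOL-Analysis.Analysis"
begin

definition hypergeom :: "complex list \<Rightarrow> complex list \<Rightarrow> complex \<Rightarrow> complex" where
  "hypergeom as bs z =
     (\<Sum>n. (\<Prod>a\<leftarrow>as. pochhammer a n) / (\<Prod>b\<leftarrow>bs. pochhammer b n) * z ^ n / fact n)"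

definition split5 :: "complex list \<Rightarrow> complex list" where
  "split5 cs = concat (map (\<lambda>a. map (\<lambda>k. (a + of_nat k) / 5) [2..<7]) cs)"

end

theory Submission
  imports Defs
begin

lemma prod_list_map_mult:
  "prod_list (map (\<lambda>x. f x * g x) xs) = prod_list (map f xs) * (prod_list (map g xs) :: 'a::comm_monoid_mult)"
  by (induction xs) (auto simp: algebra_simps)

lemma prod_list_map_const: "prod_list (map (\<lambda>_. c) xs) = (c::'a::comm_monoid_mult) ^ length xs"
  by (induction xs) auto

lemma lim_one: "(\<lambda>n. (a + of_nat n) / (of_nat n + 1 :: complex)) \<longlonglongrightarrow> 1"
proof -
  have e: "(a + of_nat n) / (of_nat n + 1 :: complex) = 1 + (a - 1) * (1 / of_nat (Suc n))" for n
  proof -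
    have nz: "(1 + of_nat n :: complex) \<noteq> 0" using of_nat_neq_0[of n, where ?'a=complex] by simp
    show ?thesis using nz by (simp add: field_simps)
  qed
  have "(\<lambda>n. 1 / of_nat (Suc n) :: complex) \<longlonglongrightarrow> 0"
    using lim_1_over_n LIMSEQ_Suc by blast
  hence "(\<lambda>n. 1 + (a - 1) * (1 / of_nat (Suc n) :: complex)) \<longlonglongrightarrow> 1 + (a-1) * 0"
    by (intro tendsto_intros)
  thus ?thesis unfolding e by simp
qed

lemma lim_prod: "(\<lambda>n. prod_list (map (\<lambda>a. (a + of_nat n) / (of_nat n + 1 :: complex)) as)) \<longlonglongrightarrow> 1"
proof (induction as)
  case Nil thus ?case by simp
next
  case (Cons a as)
  have "(\<lambda>n. (a + of_nat n) / (of_nat n + 1 :: complex) * prod_list (map (\<lambda>a. (a + of_nat n) / (of_nat n + 1 :: complex)) as)) \<longlonglongrightarrow> 1 * 1"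
    by (intro tendsto_mult lim_one Cons)
  thus ?case by simp
qed

definition hterm :: "complex list \<Rightarrow> complex list \<Rightarrow> complex \<Rightarrow> nat \<Rightarrow> complex" where
  "hterm as bs z n = (\<Prod>a\<leftarrow>as. pochhammer a n) / (\<Prod>b\<leftarrow>bs. pochhammer b n) * z ^ n / fact n"

lemma hterm_Suc:
  "hterm as bs z (Suc n) = hterm as bs z n *
     ((\<Prod>a\<leftarrow>as. a + of_nat n) / (\<Prod>b\<leftarrow>bs. b + of_nat n) / (of_nat n + 1) * z)"
proof -
  have "hterm as bs z (Suc n) = ((\<Prod>a\<leftarrow>as. pochhammer a n) * (\<Prod>a\<leftarrow>as. a + of_nat n)) /
     ((\<Prod>b\<leftarrow>bs. pochhammer b n) * (\<Prod>b\<leftarrow>bs. b + of_nat n)) * (z ^ n * z) / (fact n * (of_nat n + 1))"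
    unfolding hterm_def pochhammer_Suc prod_list_map_mult by (simp add: algebra_simps)
  also have "\<dots> = hterm as bs z n *
     ((\<Prod>a\<leftarrow>as. a + of_nat n) / (\<Prod>b\<leftarrow>bs. b + of_nat n) / (of_nat n + 1) * z)"
    unfolding hterm_def by (simp add: divide_inverse inverse_mult_distrib mult_ac)
  finally show ?thesis .
qed

lemma ratio_eq:
  assumes "length as \<le> length bs + 1"
  shows "(\<Prod>a\<leftarrow>as. a + of_nat n) / (\<Prod>b\<leftarrow>bs. b + of_nat n) / (of_nat n + 1 :: complex)
    = prod_list (map (\<lambda>a. (a + of_nat n) / (of_nat n + 1)) as) /
      prod_list (map (\<lambda>a. (a + of_nat n) / (of_nat n + 1)) bs) / (of_nat n + 1) ^ (length bs + 1 - length as)"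
proof -
  have nz: "(of_nat n + 1 :: complex) \<noteq> 0" using of_nat_neq_0[of n, where ?'a=complex] by (simp add: add.commute)
  have e: "(\<Prod>a\<leftarrow>xs. a + of_nat n) = prod_list (map (\<lambda>a. (a + of_nat n) / (of_nat n + 1)) xs) * (of_nat n + 1 :: complex) ^ length xs" for xs
  proof -
    have "(\<Prod>a\<leftarrow>xs. a + of_nat n) = (\<Prod>a\<leftarrow>xs. (a + of_nat n) / (of_nat n + 1) * (of_nat n + 1 :: complex))"
      using nz by simp
    thus ?thesis unfolding prod_list_map_mult prod_list_map_const .
  qed
  have pw: "(of_nat n + 1 :: complex) ^ (length bs + 1) = (of_nat n + 1) ^ length as * (of_nat n + 1) ^ (length bs + 1 - length as)"
    using assms by (simp flip: power_add)
  define A where "A = prod_list (map (\<lambda>a. (a + of_nat n) / (of_nat n + 1 :: complex)) as)"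
  define B where "B = prod_list (map (\<lambda>a. (a + of_nat n) / (of_nat n + 1 :: complex)) bs)"
  define N where "N = (of_nat n + 1 :: complex)"
  have pw': "N ^ length bs * N = N ^ length as * N ^ (length bs + 1 - length as)"
    using pw unfolding N_def by (simp add: mult.commute)
  have "A * N ^ length as / (B * N ^ length bs) / N = A / B / N ^ (length bs + 1 - length as)"
  proof (cases "B = 0")
    case True thus ?thesis by simp
  next
    case False
    have "A * N ^ length as / (B * N ^ length bs) / N = A * N ^ length as / (B * (N ^ length bs * N))"
      by (simp add: mult.assoc)
    also have "\<dots> = A * N ^ length as / (B * (N ^ length as * N ^ (length bs + 1 - length as)))"
      by (simp only: pw')
    also have "\<dots> = A / B / N ^ (length bs + 1 - length as)"
      using False nz unfolding N_def by (simp add: field_simps)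
    finally show ?thesis .
  qed
  thus ?thesis unfolding e A_def B_def N_def by simp
qed

lemma hyp_summable:
  assumes "length as \<le> length bs \<or> (length as = length bs + 1 \<and> norm z < 1)"
  shows "summable (hterm as bs z)"
proof -
  define k where "k = length bs + 1 - length as"
  define R where "R n = prod_list (map (\<lambda>a. (a + of_nat n) / (of_nat n + 1 :: complex)) as) /
      prod_list (map (\<lambda>a. (a + of_nat n) / (of_nat n + 1 :: complex)) bs) / (of_nat n + 1) ^ k * z" for n
  define L where "L = (if k = 0 then norm z else 0)"
  have L1: "L < 1" using assms unfolding L_def k_def by auto
  have inv: "(\<lambda>n. 1 / (of_nat n + 1 :: complex) ^ k) \<longlonglongrightarrow> (if k = 0 then 1 else 0)"
  proof (cases "k = 0")
    case True thus ?thesis by simp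
  next
    case False
    have "(\<lambda>n. 1 / of_nat (Suc n) :: complex) \<longlonglongrightarrow> 0"
      using lim_1_over_n LIMSEQ_Suc by blast
    hence "(\<lambda>n. (1 / of_nat (Suc n) :: complex) ^ k) \<longlonglongrightarrow> 0 ^ k"
      by (intro tendsto_intros)
    thus ?thesis using False by (simp add: power_one_over add.commute zero_power)
  qed
  have "(\<lambda>n. R n) \<longlonglongrightarrow> 1 / 1 * (if k = 0 then 1 else 0) * z"
  proof -
    have "(\<lambda>n. prod_list (map (\<lambda>a. (a + of_nat n) / (of_nat n + 1 :: complex)) as) /
      prod_list (map (\<lambda>a. (a + of_nat n) / (of_nat n + 1 :: complex)) bs) * (1 / (of_nat n + 1) ^ k) * z)
      \<longlonglongrightarrow> 1 / 1 * (if k = 0 then 1 else 0) * z"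
      by (intro tendsto_intros lim_prod inv) simp
    thus ?thesis unfolding R_def by simp
  qed
  hence "(\<lambda>n. norm (R n)) \<longlonglongrightarrow> L"
    unfolding L_def by (auto dest: tendsto_norm)
  hence "eventually (\<lambda>n. norm (R n) < (L + 1) / 2) sequentially"
    using L1 by (intro order_tendstoD) auto
  then obtain N where N: "\<And>n. n \<ge> N \<Longrightarrow> norm (R n) < (L + 1) / 2"
    unfolding eventually_sequentially by blast
  show ?thesis
  proof (rule summable_ratio_test[where c = "(L+1)/2" and N = N])
    show "(L + 1) / 2 < 1" using L1 by simp
  next
    fix n assume "n \<ge> N"
    have "hterm as bs z (Suc n) = hterm as bs z n * R n"
      unfolding hterm_Suc R_def k_def
      by (subst ratio_eq[of as bs n]) (use assms in auto)
    hence "norm (hterm as bs z (Suc n)) = norm (hterm as bs z n) * norm (R n)"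
      by (simp add: norm_mult)
    also have "\<dots> \<le> norm (hterm as bs z n) * ((L + 1) / 2)"
      using N[OF \<open>n \<ge> N\<close>] by (intro mult_left_mono) auto
    finally show "norm (hterm as bs z (Suc n)) \<le> (L + 1) / 2 * norm (hterm as bs z n)"
      by (simp add: mult.commute)
  qed
qed


lemma poch5: "pochhammer (z::complex) (5*n) = 5^(5*n) * pochhammer (z/5) n * pochhammer ((z+1)/5) n
   * pochhammer ((z+2)/5) n * pochhammer ((z+3)/5) n * pochhammer ((z+4)/5) n"
proof (induction n)
  case 0 thus ?case by simp
next
  case (Suc n)
  have e: "5 * Suc n = Suc (Suc (Suc (Suc (Suc (5*n)))))" by simp
  show ?case unfolding e pochhammer_Suc Suc
    by (simp add: field_simps)
qed

definition Q5 :: "complex \<Rightarrow> nat \<Rightarrow> complex" where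
  "Q5 a m = prod_list (map (\<lambda>k. pochhammer ((a + of_nat k) / 5) m) [2..<7])"

lemma poch_5m2: "pochhammer (a::complex) (5*m+2) = pochhammer a 2 * 5^(5*m) * Q5 a m"
proof -
  have "pochhammer a (2 + 5*m) = pochhammer a 2 * pochhammer (a + 2) (5*m)"
    using pochhammer_product'[of a 2 "5*m"] by simp
  also have "pochhammer (a+2) (5*m) = 5^(5*m) * Q5 a m"
    unfolding poch5 Q5_def by (simp add: upt_rec add.assoc mult.assoc)
  finally show ?thesis by (simp add: add.commute mult.assoc)
qed

lemma prod_split5: "prod_list (map (\<lambda>b. pochhammer b m) (split5 xs)) = prod_list (map (\<lambda>a. Q5 a m) xs)"
  by (induction xs) (simp_all add: split5_def Q5_def o_def)

lemma prod_5m2: "(\<Prod>a\<leftarrow>xs. pochhammer (a::complex) (5*m+2)) =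
   (\<Prod>a\<leftarrow>xs. pochhammer a 2) * 5^(5*m*length xs) * prod_list (map (\<lambda>a. Q5 a m) xs)"
  unfolding poch_5m2 prod_list_map_mult prod_list_map_const by (simp add: power_mult)

lemma fact_5m2: "(fact (5*m+2) :: complex) = 2 * 5^(5*m) * (pochhammer (3/5) m * pochhammer (4/5) m
    * pochhammer (6/5) m * pochhammer (7/5) m) * fact m"
proof -
  have "(fact (5*m+2) :: complex) = pochhammer 1 (2 + 5*m)" by (simp add: pochhammer_fact add.commute)
  also have "\<dots> = pochhammer 1 2 * pochhammer 3 (5*m)"
    using pochhammer_product'[of "1::complex" 2 "5*m"] by simp
  also have "pochhammer (3::complex) (5*m) = 5^(5*m) * pochhammer (3/5) m * pochhammer (4/5) m
      * pochhammer 1 m * pochhammer (6/5) m * pochhammer (7/5) m"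
    unfolding poch5 by simp
  finally show ?thesis by (simp add: pochhammer_fact[symmetric] eval_nat_numeral pochhammer_Suc)
qed

lemma poch_frac_nz: "pochhammer (of_nat j / 5 :: complex) m \<noteq> 0" if "j > 0"
proof
  assume "pochhammer (of_nat j / 5 :: complex) m = 0"
  then obtain k where "(of_nat j / 5 :: complex) = - of_nat k" by (auto simp: pochhammer_eq_0_iff)
  hence "Re (of_nat j / 5 :: complex) = Re (- of_nat k)" by simp
  thus False using that by simp
qed


lemma alg:
  fixes PA2 Xp QA PB2 Xq QB w X5 S F Pm :: complex
  assumes "PB2 \<noteq> 0" "QB \<noteq> 0" "S \<noteq> 0" "F \<noteq> 0" "Xq \<noteq> 0" "X5 \<noteq> 0" "Pm \<noteq> 0"
    and "Pm * Xp = Xq * X5"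
  shows "5 * (PA2*Xp*QA)/(PB2*Xq*QB) * (w^2*W) / (2*X5*S*F) = 5*w^2/2*(PA2/PB2)*(QA/(S*QB) * (W/Pm)/F)"
proof -
  have "Xp = Xq * X5 / Pm" using assms by (simp add: field_simps)
  thus ?thesis using assms by (simp add: field_simps)
qed

lemma termwise:
  fixes as bs :: "complex list" and w :: complex
  assumes "\<forall>b\<in>set bs. \<forall>n::nat. b \<noteq> - of_nat n"
  shows "5 * hterm as bs w (5*m+2) = 5 * w^2 / 2 * ((\<Prod>a\<leftarrow>as. pochhammer a 2) / (\<Prod>b\<leftarrow>bs. pochhammer b 2))
     * hterm (split5 as) ([3/5, 4/5, 6/5, 7/5] @ split5 bs)
             ((w / (5::complex) powi (1 + int (length bs) - int (length as))) ^ 5) m"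
proof -
  define P where "P = (5::complex) powi (1 + int (length bs) - int (length as))"
  have Pnz: "P \<noteq> 0" unfolding P_def by simp
  have "P * 5 ^ length as = 5 ^ (1 + length bs)"
  proof -
    have "P * 5 ^ length as = (5::complex) powi ((1 + int (length bs) - int (length as)) + int (length as))"
      unfolding P_def by (subst power_int_add) simp_all
    also have "\<dots> = 5 powi (int (1 + length bs))" by simp
    finally show ?thesis by (simp only: power_int_of_nat)
  qed
  hence Pe: "P^(5*m) * 5^(5*m*length as) = 5^(5*m*length bs) * (5::complex)^(5*m)"
    by (metis (no_types, lifting) power_add power_mult power_mult_distrib mult.commute add.commute power_one_right)
  have bnz: "(\<Prod>b\<leftarrow>bs. pochhammer b n) \<noteq> 0" for n
    using assms by (auto simp: prod_list_zero_iff pochhammer_eq_0_iff)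
  have Bnz: "(\<Prod>b\<leftarrow>bs. pochhammer b 2) \<noteq> 0" "prod_list (map (\<lambda>a. Q5 a m) bs) \<noteq> 0"
    using bnz[of "5*m+2"] unfolding prod_5m2 by auto
  have Snz: "pochhammer (3/5) m * pochhammer (4/5) m * pochhammer (6/5) m * pochhammer (7/5::complex) m \<noteq> 0"
    using poch_frac_nz[of 3 m] poch_frac_nz[of 4 m] poch_frac_nz[of 6 m] poch_frac_nz[of 7 m] by simp
  have wp: "w^(5*m+2) = w^2*(w^5)^m" by (simp only: power_add power_mult add.commute[of "5*m" 2])
  have "5 * hterm as bs w (5*m+2) = 5 * ((\<Prod>a\<leftarrow>as. pochhammer a 2) * 5^(5*m*length as) * prod_list (map (\<lambda>a. Q5 a m) as))
     / ((\<Prod>b\<leftarrow>bs. pochhammer b 2) * 5^(5*m*length bs) * prod_list (map (\<lambda>a. Q5 a m) bs))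
     * (w^2 * (w^5)^m) / (2 * 5^(5*m) * (pochhammer (3/5) m * pochhammer (4/5) m
    * pochhammer (6/5) m * pochhammer (7/5) m) * fact m)"
    unfolding hterm_def prod_5m2 fact_5m2 wp by (simp only: times_divide_eq_left times_divide_eq_right mult.assoc)
  also have "\<dots> = 5 * w^2 / 2 * ((\<Prod>a\<leftarrow>as. pochhammer a 2) / (\<Prod>b\<leftarrow>bs. pochhammer b 2))
     * (prod_list (map (\<lambda>a. Q5 a m) as) / ((pochhammer (3/5) m * pochhammer (4/5) m
    * pochhammer (6/5) m * pochhammer (7/5) m) * prod_list (map (\<lambda>a. Q5 a m) bs)) * ((w^5)^m / P^(5*m)) / fact m)"
    by (rule alg) (use Bnz Snz Pnz Pe in auto)
  also have "\<dots> = 5 * w^2 / 2 * ((\<Prod>a\<leftarrow>as. pochhammer a 2) / (\<Prod>b\<leftarrow>bs. pochhammer b 2))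
     * hterm (split5 as) ([3/5, 4/5, 6/5, 7/5] @ split5 bs) ((w / P) ^ 5) m"
    unfolding hterm_def by (simp add: prod_split5 power_divide power_mult mult.assoc)
  finally show ?thesis unfolding P_def .
qed


lemma omega5: "(exp (2 * pi * \<i> / 5)) ^ 5 = 1"
proof -
  have "(exp (2 * pi * \<i> / 5)) ^ 5 = exp (of_nat 5 * (2 * pi * \<i> / 5))"
    by (simp only: exp_of_nat_mult)
  also have "\<dots> = exp (2 * of_real pi * \<i>)" by (rule arg_cong[where f=exp]) simp
  finally show ?thesis by (simp only: exp_two_pi_i)
qed

lemma omega_pow_1: "(exp (2 * pi * \<i> / 5)) ^ j = 1 \<Longrightarrow> 5 dvd j"
proof -
  assume a: "(exp (2 * pi * \<i> / 5)) ^ j = 1"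
  have "(exp (2 * pi * \<i> / 5)) ^ j = exp (of_nat j * (2 * pi * \<i> / 5))"
    by (simp only: exp_of_nat_mult)
  with a have "exp (of_nat j * (2 * pi * \<i> / 5)) = 1" by simp
  then obtain n :: int where "Im (of_nat j * (2 * pi * \<i> / 5)) = of_int (2 * n) * pi"
    unfolding exp_eq_1 by blast
  hence "real j * 2 * pi / 5 = 2 * real_of_int n * pi" by simp
  hence "real j = 5 * real_of_int n" using pi_gt_zero by (simp add: field_simps)
  hence "int j = 5 * n" by linarith
  thus "5 dvd j" by presburger
qed

lemma omega_sum: "(\<Sum>k=0..4. ((exp (2 * pi * \<i> / 5)) ^ (1 + 2*n)) ^ k) = (if n mod 5 = 2 then 5 else 0)"
proof -
  define z where "z = (exp (2 * pi * \<i> / 5)) ^ (1 + 2*n)"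
  have s: "(\<Sum>k=0..4. z ^ k) = 1 + z + z^2 + z^3 + z^4"
    by (simp add: numeral_eq_Suc)
  have z5: "z ^ 5 = 1" unfolding z_def
    by (metis omega5 power_mult power_one mult.commute)
  show ?thesis
  proof (cases "n mod 5 = 2")
    case True
    hence "1 + 2*n = 5 * ((1 + 2*n) div 5)" by presburger
    hence "z = 1" unfolding z_def by (metis power_mult omega5 power_one)
    thus ?thesis using True unfolding z_def[symmetric] s by simp
  next
    case False
    hence "\<not> 5 dvd (1 + 2*n)" by presburger
    hence "z \<noteq> 1" unfolding z_def using omega_pow_1 by blast
    moreover have "(z - 1) * (1 + z + z^2 + z^3 + z^4) = z^5 - 1" by (simp add: algebra_simps eval_nat_numeral)
    ultimately show ?thesis using False z5 unfolding z_def[symmetric] s by simp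
  qed
qed


lemma hyp_eq: "hypergeom as bs z = suminf (hterm as bs z)"
  unfolding hypergeom_def hterm_def ..

theorem theorem8:
  fixes c x :: complex and as bs :: "complex list" and p q :: nat
  assumes "p = length as" and "q = length bs"
    and "\<forall>b\<in>set bs. \<forall>n::nat. b \<noteq> - of_nat n"
    and "5 * p \<le> 5 * q + 4 \<or>
         (p = q + 1 \<and> norm ((c * x^2 / (5::complex) powi (1 + int q - int p)) ^ 5) < 1)"
  shows "(\<Sum>k=0..4. (exp (2 * pi * \<i> / 5)) ^ k *
            hypergeom as bs (c * (x * (exp (2 * pi * \<i> / 5)) ^ k)^2))
       = 5 * c^2 * x^4 / 2 * ((\<Prod>a\<leftarrow>as. pochhammer a 2) / (\<Prod>b\<leftarrow>bs. pochhammer b 2))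
         * hypergeom (split5 as) ([3/5, 4/5, 6/5, 7/5] @ split5 bs)
             ((c * x^2 / (5::complex) powi (1 + int q - int p)) ^ 5)"
proof -
  define \<omega> where "\<omega> = exp (2 * pi * \<i> / 5)"
  define w where "w = c * x^2"
  define K where "K = 5 * c^2 * x^4 / 2 * ((\<Prod>a\<leftarrow>as. pochhammer a 2) / (\<Prod>b\<leftarrow>bs. pochhammer b 2))"
  define u where "u = hterm (split5 as) ([3/5, 4/5, 6/5, 7/5] @ split5 bs)
             ((c * x^2 / (5::complex) powi (1 + int q - int p)) ^ 5)"
  have nw: "norm \<omega> = 1" unfolding \<omega>_def by (simp add: norm_exp_eq_Re)
  have arg: "c * (x * \<omega> ^ k)^2 = w * \<omega> ^ (2*k)" for k
    unfolding w_def by (simp add: power_mult_distrib power_mult mult.commute)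
  have summ: "summable (hterm as bs (c * (x * \<omega> ^ k)^2))" for k
  proof (rule hyp_summable)
    show "length as \<le> length bs \<or> (length as = length bs + 1 \<and> norm (c * (x * \<omega> ^ k)^2) < 1)"
    proof (cases "5 * p \<le> 5 * q + 4")
      case True thus ?thesis using assms(1,2) by auto
    next
      case False
      with assms(4) have pq: "p = q + 1" and n: "norm ((c * x^2 / (5::complex) powi (1 + int q - int p)) ^ 5) < 1"
        by auto
      from n pq have "norm w ^ 5 < 1" unfolding w_def by (simp add: norm_power)
      hence "norm w < 1" by (metis power_less_imp_less_base power_one norm_ge_zero zero_le_one)
      hence "norm (c * (x * \<omega> ^ k)^2) < 1" unfolding arg by (simp add: norm_mult norm_power nw)
      thus ?thesis using pq assms(1,2) by simp
    qed
  qed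
  have hw: "hterm as bs (w * \<omega> ^ (2*k)) n = hterm as bs w n * \<omega> ^ (2*k*n)" for k n
    unfolding hterm_def by (simp add: power_mult_distrib power_mult)
  define f where "f n = (\<Sum>k=0..4. \<omega> ^ k * hterm as bs (c * (x * \<omega> ^ k)^2) n)" for n
  have f_eq: "f n = (if n mod 5 = 2 then 5 * hterm as bs w n else 0)" for n
  proof -
    have "f n = hterm as bs w n * (\<Sum>k=0..4. (\<omega> ^ (1 + 2*n)) ^ k)"
      unfolding f_def arg hw sum_distrib_left
      by (rule sum.cong) (simp_all add: power_mult[symmetric] power_add[symmetric] algebra_simps)
    thus ?thesis unfolding \<omega>_def omega_sum by simp
  qed
  have LHS: "(\<Sum>k=0..4. \<omega> ^ k * hypergeom as bs (c * (x * \<omega> ^ k)^2)) = suminf f"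
  proof -
    have "(\<Sum>k=0..4. \<omega> ^ k * hypergeom as bs (c * (x * \<omega> ^ k)^2))
        = (\<Sum>k=0..4. \<Sum>n. \<omega> ^ k * hterm as bs (c * (x * \<omega> ^ k)^2) n)"
      unfolding hyp_eq by (intro sum.cong refl suminf_mult[symmetric] summ)
    also have "\<dots> = suminf f"
      unfolding f_def by (rule suminf_sum[symmetric]) (intro summable_mult summ)
    finally show ?thesis .
  qed
  have sf: "summable f"
    unfolding f_def by (intro summable_sum summable_mult summ)
  have "(\<lambda>m. f (5*m+2)) sums suminf f"
  proof (subst sums_mono_reindex)
    show "strict_mono (\<lambda>m. 5*m+2::nat)" by (rule strict_monoI) simp
    show "f n = 0" if "n \<notin> range (\<lambda>m. 5*m+2::nat)" for n
    proof -
      have "n mod 5 \<noteq> 2"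
      proof
        assume "n mod 5 = 2"
        hence "n = 5 * (n div 5) + 2" by presburger
        thus False using that by blast
      qed
      thus ?thesis unfolding f_eq by simp
    qed
    show "f sums suminf f" using sf by (rule summable_sums)
  qed
  moreover have "f (5*m+2) = K * u m" for m
  proof -
    have "(5*m+2) mod 5 = (2::nat)" by presburger
    hence "f (5*m+2) = 5 * hterm as bs w (5*m+2)" unfolding f_eq by (simp only: if_True refl)
    also have "\<dots> = K * u m"
      unfolding termwise[OF assms(3)] K_def u_def w_def assms(1,2)
      by (simp add: power_mult_distrib power_mult[symmetric])
    finally show ?thesis .
  qed
  ultimately have ser: "(\<lambda>m. K * u m) sums suminf f" by simp
  have "suminf f = K * suminf u"
  proof (cases "K = 0")
    case True thus ?thesis using ser sums_unique by fastforce
  next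
    case False
    hence "summable u" using ser summable_cmult_iff sums_summable by blast
    thus ?thesis using ser sums_unique suminf_mult by metis
  qed
  thus ?thesis using LHS unfolding \<omega>_def K_def u_def hyp_eq by simp
qed

end
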